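(* Let $\vec a\in\mathbb R^4\setminus\{0\}$, let $V(p)=\vec a+\langle\vec a,p\rangle p$ on $\mathbb H^3$, let $q\neq0$, and let $\gamma\colon I\to\mathbb H^3$ be a non-geodesic curve parametrized by arc-length which is a conformal trajectory of $V$ with torsion identically zero. Then $\langle\vec a,\gamma(s)\rangle=0$ for all $s\in I$ and $\vec a$ is space-like, i.e. $\langle\vec a,\vec a\rangle>0$.
   Context: $\mathbb R^4$ carries the Lorentzian metric $\langle\cdot,\cdot\rangle=dx^2+dy^2+dz^2-dt^2$ and $\mathbb H^3=\{p\in\mathbb R^4:\langle p,p\rangle=-1,\ t>0\}$ with the induced metric and Levi-Civita connection $\nabla$. The cross product of $u,v\in T_p\mathbb H^3$ is the unique $u\times v\in T_p\mathbb H^3$ with $\langle u\times v,w\rangle=\det(u,v,w,p)$ for all $w\in T_p\mathbb H^3$. For a fixed real $q\neq0$, a conformal trajectory of $V$ is a regular curve with $\nabla_{\gamma'}\gamma'=q\,V\times\gamma'$. Torsion is defined by the Frenet frame $T=\gamma'$, $\nabla_TT=\kappa N$ ($\kappa>0$), $B=T\times N$, $\nabla_TN=-\kappa T+\tau B$, $\nabla_TB=-\tau N$. *)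

theory Defs
  imports "HOL-Analysis.Analysis"
begin

definition lor :: "real^4 \<Rightarrow> real^4 \<Rightarrow> real" where
  "lor u v = u$1 * v$1 + u$2 * v$2 + u$3 * v$3 - u$4 * v$4"

definition in_H3 :: "real^4 \<Rightarrow> bool" where
  "in_H3 p \<longleftrightarrow> lor p p = -1 \<and> p$4 > 0"

definition tangentH3 :: "real^4 \<Rightarrow> real^4 \<Rightarrow> bool" where
  "tangentH3 p u \<longleftrightarrow> lor u p = 0"

definition rows4 :: "real^4 \<Rightarrow> real^4 \<Rightarrow> real^4 \<Rightarrow> real^4 \<Rightarrow> real^4^4" where
  "rows4 u v w p = (\<chi> i. if i = 1 then u else if i = 2 then v else if i = 3 then w else p)"

definition crossH3 :: "real^4 \<Rightarrow> real^4 \<Rightarrow> real^4 \<Rightarrow> real^4" where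
  "crossH3 p u v = (THE x. tangentH3 p x \<and>
       (\<forall>w. tangentH3 p w \<longrightarrow> lor x w = det (rows4 u v w p)))"

text \<open>Levi-Civita covariant derivative of H^3 along the curve gamma of a vector field X tangent
  along gamma: tangential projection of the ambient derivative (Gauss formula, unit normal gamma
  with lor gamma gamma = -1).\<close>
definition covD :: "(real \<Rightarrow> real^4) \<Rightarrow> (real \<Rightarrow> real^4) \<Rightarrow> real \<Rightarrow> real^4" where
  "covD \<gamma> X s = vector_derivative X (at s) + lor (vector_derivative X (at s)) (\<gamma> s) *\<^sub>R \<gamma> s"

text \<open>Frenet data of a curve gamma (assumed parametrized by arc length).\<close>
definition tangentT :: "(real \<Rightarrow> real^4) \<Rightarrow> real \<Rightarrow> real^4" where
  "tangentT \<gamma> s = vector_derivative \<gamma> (at s)"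

definition curvature :: "(real \<Rightarrow> real^4) \<Rightarrow> real \<Rightarrow> real" where
  "curvature \<gamma> s = sqrt (lor (covD \<gamma> (tangentT \<gamma>) s) (covD \<gamma> (tangentT \<gamma>) s))"

definition normalN :: "(real \<Rightarrow> real^4) \<Rightarrow> real \<Rightarrow> real^4" where
  "normalN \<gamma> s = (1 / curvature \<gamma> s) *\<^sub>R covD \<gamma> (tangentT \<gamma>) s"

definition binormalB :: "(real \<Rightarrow> real^4) \<Rightarrow> real \<Rightarrow> real^4" where
  "binormalB \<gamma> s = crossH3 (\<gamma> s) (tangentT \<gamma> s) (normalN \<gamma> s)"

text \<open>Torsion: nabla_T N = -kappa T + tau B, hence tau = lor (nabla_T N) B.\<close>
definition torsion :: "(real \<Rightarrow> real^4) \<Rightarrow> real \<Rightarrow> real" where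
  "torsion \<gamma> s = lor (covD \<gamma> (normalN \<gamma>) s) (binormalB \<gamma> s)"

end

theory Submission
  imports Defs
begin

lemma det_4:
  "det (A::'a::comm_ring_1^4^4) = 
 A$1$1*A$2$2*A$3$3*A$4$4 - A$1$1*A$2$2*A$3$4*A$4$3 - A$1$1*A$2$3*A$3$2*A$4$4 + A$1$1*A$2$3*A$3$4*A$4$2 + A$1$1*A$2$4*A$3$2*A$4$3 - A$1$1*A$2$4*A$3$3*A$4$2
 - A$1$2*A$2$1*A$3$3*A$4$4 + A$1$2*A$2$1*A$3$4*A$4$3 + A$1$2*A$2$3*A$3$1*A$4$4 - A$1$2*A$2$3*A$3$4*A$4$1 - A$1$2*A$2$4*A$3$1*A$4$3 + A$1$2*A$2$4*A$3$3*A$4$1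
 + A$1$3*A$2$1*A$3$2*A$4$4 - A$1$3*A$2$1*A$3$4*A$4$2 - A$1$3*A$2$2*A$3$1*A$4$4 + A$1$3*A$2$2*A$3$4*A$4$1 + A$1$3*A$2$4*A$3$1*A$4$2 - A$1$3*A$2$4*A$3$2*A$4$1
 - A$1$4*A$2$1*A$3$2*A$4$3 + A$1$4*A$2$1*A$3$3*A$4$2 + A$1$4*A$2$2*A$3$1*A$4$3 - A$1$4*A$2$2*A$3$3*A$4$1 - A$1$4*A$2$3*A$3$1*A$4$2 + A$1$4*A$2$3*A$3$2*A$4$1"
proof -
  have f1: "finite {2::4, 3, 4}" "1 \<notin> {2::4, 3, 4}" by auto
  have f2: "finite {3::4, 4}" "2 \<notin> {3::4, 4}" by auto
  have f3: "finite {4::4}" "3 \<notin> {4::4}" by auto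
  show ?thesis
    unfolding det_def UNIV_4
    unfolding sum_over_permutations_insert[OF f1]
    unfolding sum_over_permutations_insert[OF f2]
    unfolding sum_over_permutations_insert[OF f3]
    unfolding permutes_sing
    by (simp add: sign_swap_id permutation_swap_id sign_compose permutation_compose sign_id swap_id_eq algebra_simps)
qed

definition D :: "real^4 \<Rightarrow> real^4 \<Rightarrow> real^4 \<Rightarrow> real^4 \<Rightarrow> real" where
  "D u v w p = det (rows4 u v w p)"

lemma D_expand: "D u v w p =
 u$1 * v$2 * w$3 * p$4 - u$1 * v$2 * w$4 * p$3 - u$1 * v$3 * w$2 * p$4 + u$1 * v$3 * w$4 * p$2 + u$1 * v$4 * w$2 * p$3 - u$1 * v$4 * w$3 * p$2
 - u$2 * v$1 * w$3 * p$4 + u$2 * v$1 * w$4 * p$3 + u$2 * v$3 * w$1 * p$4 - u$2 * v$3 * w$4 * p$1 - u$2 * v$4 * w$1 * p$3 + u$2 * v$4 * w$3 * p$1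
 + u$3 * v$1 * w$2 * p$4 - u$3 * v$1 * w$4 * p$2 - u$3 * v$2 * w$1 * p$4 + u$3 * v$2 * w$4 * p$1 + u$3 * v$4 * w$1 * p$2 - u$3 * v$4 * w$2 * p$1
 - u$4 * v$1 * w$2 * p$3 + u$4 * v$1 * w$3 * p$2 + u$4 * v$2 * w$1 * p$3 - u$4 * v$2 * w$3 * p$1 - u$4 * v$3 * w$1 * p$2 + u$4 * v$3 * w$2 * p$1"
  unfolding D_def det_4 rows4_def by simp

definition eps :: "4 \<Rightarrow> real" where "eps i = (if i = 4 then -1 else 1)"

definition Cr :: "real^4 \<Rightarrow> real^4 \<Rightarrow> real^4 \<Rightarrow> real^4" where
  "Cr p u v = (\<chi> i. eps i * D u v (axis i 1) p)"

lemma axis4: "axis (1::4) (1::real) $ 1 = 1" "axis (1::4) (1::real) $ 2 = 0" "axis (1::4) (1::real) $ 3 = 0" "axis (1::4) (1::real) $ 4 = 0"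
  "axis (2::4) (1::real) $ 1 = 0" "axis (2::4) (1::real) $ 2 = 1" "axis (2::4) (1::real) $ 3 = 0" "axis (2::4) (1::real) $ 4 = 0"
  "axis (3::4) (1::real) $ 1 = 0" "axis (3::4) (1::real) $ 2 = 0" "axis (3::4) (1::real) $ 3 = 1" "axis (3::4) (1::real) $ 4 = 0"
  "axis (4::4) (1::real) $ 1 = 0" "axis (4::4) (1::real) $ 2 = 0" "axis (4::4) (1::real) $ 3 = 0" "axis (4::4) (1::real) $ 4 = 1"
  by (simp_all add: axis_def)

lemma lor_Cr: "lor (Cr p u v) w = D u v w p"
  unfolding lor_def Cr_def by (simp add: D_expand eps_def axis4 algebra_simps)

lemma lor_sym: "lor u v = lor v u" unfolding lor_def by (simp add: algebra_simps)

lemma tangent_aux: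
  fixes z1 z2 z3 z4 p1 p2 p3 p4 :: real
  assumes pp: "p1*p1+p2*p2+p3*p3 - p4*p4 = -1" and p4: "p4>0"
    and zp: "z1*p1+z2*p2+z3*p3 - z4*p4 = 0" and zz: "z1*z1+z2*z2+z3*z3 - z4*z4 \<le> 0"
  shows "z1=0 \<and> z2=0 \<and> z3=0 \<and> z4=0"
proof -
  define S where "S = z1*z1+z2*z2+z3*z3"
  define P where "P = p1*p1+p2*p2+p3*p3"
  have e: "S*P - (z1*p1+z2*p2+z3*p3)*(z1*p1+z2*p2+z3*p3)
       = (z1*p2 - z2*p1)*(z1*p2 - z2*p1) + (z1*p3 - z3*p1)*(z1*p3 - z3*p1) + (z2*p3 - z3*p2)*(z2*p3 - z3*p2)"
    unfolding S_def P_def by (simp add: algebra_simps)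
  have "(z1*p1+z2*p2+z3*p3)*(z1*p1+z2*p2+z3*p3) \<le> S*P"
    using e zero_le_square[of "z1*p2 - z2*p1"] zero_le_square[of "z1*p3 - z3*p1"] zero_le_square[of "z2*p3 - z3*p2"] by linarith
  then have A: "(z4*p4)*(z4*p4) \<le> S*P" using zp by (smt (verit))
  have Pp: "P = p4*p4 - 1" using pp P_def by simp
  have B: "S \<le> z4*z4" using zz S_def by simp
  have "S * (p4*p4) \<le> z4*z4*(p4*p4)" using B by (simp add: mult_right_mono)
  also have "\<dots> \<le> S*(p4*p4) - S" using A Pp by (simp add: algebra_simps)
  finally have "S \<le> 0" by simp
  moreover have "S \<ge> 0" unfolding S_def by simp
  ultimately have "S = 0" by simp
  then have "z1 = 0" "z2 = 0" "z3 = 0" using zero_le_square[of z1] zero_le_square[of z2] zero_le_square[of z3] unfolding S_def by (smt (verit) mult_eq_0_iff)+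
  with zp p4 show ?thesis by simp
qed

lemma spacelike_tangent:
  assumes "in_H3 p" "lor z p = 0" "z \<noteq> 0"
  shows "lor z z > 0"
proof (rule ccontr)
  assume "\<not> lor z z > 0"
  then have "z$1=0 \<and> z$2=0 \<and> z$3=0 \<and> z$4=0"
    using assms(1,2) by (intro tangent_aux[of "p$1" "p$2" "p$3" "p$4"]) (auto simp: in_H3_def lor_def)
  then have "z = 0" by (simp add: vec_eq_iff forall_4)
  with assms(3) show False by simp
qed
lemma D_rep: "D u u w p = 0" "D u v u p = 0" "D u v w u = 0" "D u v v p = 0" "D u v w v = 0" "D u v w w = 0"
  by (simp_all add: D_expand)

lemma lor_diff: "lor (x - y) w = lor x w - lor y w" unfolding lor_def by (simp add: algebra_simps)

lemma crossH3_Cr: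
  assumes "in_H3 p"
  shows "crossH3 p u v = Cr p u v"
  unfolding crossH3_def
proof (rule the_equality)
  show "tangentH3 p (Cr p u v) \<and> (\<forall>w. tangentH3 p w \<longrightarrow> lor (Cr p u v) w = det (rows4 u v w p))"
    unfolding tangentH3_def by (simp add: lor_Cr D_rep D_def[symmetric])
next
  fix x assume x: "tangentH3 p x \<and> (\<forall>w. tangentH3 p w \<longrightarrow> lor x w = det (rows4 u v w p))"
  let ?z = "x - Cr p u v"
  have zt: "lor ?z p = 0" using x unfolding tangentH3_def by (simp add: lor_diff lor_Cr D_rep)
  then have "lor ?z ?z = 0" using x unfolding tangentH3_def by (simp add: lor_diff lor_Cr D_def)
  then have "?z = 0" using spacelike_tangent[OF assms zt] by force
  then show "x = Cr p u v" by simp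
qed

lemma Gram: "det (M::real^4^4) * det N = - det (\<chi> i j. lor (M$i) (N$j))"
proof -
  define Jm :: "real^4^4" where "Jm = (\<chi> i j. if i = j then eps i else 0)"
  have dJ: "det Jm = -1" unfolding Jm_def det_4 by (simp add: eps_def)
  have "(\<chi> i j. lor (M$i) (N$j)) = M ** Jm ** transpose N"
    by (simp add: vec_eq_iff matrix_matrix_mult_def sum_4 transpose_def lor_def Jm_def eps_def forall_4)
  then have "det (\<chi> i j. lor (M$i) (N$j)) = det M * det Jm * det N" by (simp add: det_mul)
  then show ?thesis using dJ by simp
qed

lemma lor_axis: "lor u (axis i 1) = eps i * u$i" "lor (axis i 1) u = eps i * u$i"
  using exhaust_4[of i] by (auto simp: lor_def axis4 eps_def)


lemma key_alg:
  assumes H: "in_H3 p" and Tp: "lor T p = 0" and Np: "lor N p = 0" and TT: "lor T T = 1"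
    and NN: "lor N N = 1" and NT: "lor N T = 0"
  shows "D a N (Cr p T N) p = lor a T"
proof -
  define b where "b = Cr p T N"
  define \<beta> where "\<beta> = lor b b"
  have bw: "\<And>w. lor b w = D T N w p" unfolding b_def by (rule lor_Cr)
  have pp: "lor p p = -1" using H unfolding in_H3_def by simp
  have bT: "lor b T = 0" "lor T b = 0" using bw[of T] by (simp_all add: D_rep lor_sym[of T])
  have bN: "lor b N = 0" "lor N b = 0" using bw[of N] by (simp_all add: D_rep lor_sym[of N])
  have bp: "lor b p = 0" "lor p b = 0" using bw[of p] by (simp_all add: D_rep lor_sym[of p])
  have sy: "lor p T = 0" "lor p N = 0" "lor T N = 0" using Tp Np NT by (simp_all add: lor_sym)
  have Dbeta: "D T N b p = \<beta>" using bw[of b] \<beta>_def by simp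
  have "det (\<chi> i j. lor (rows4 a N b p $ i) (rows4 T N b p $ j)) = - lor a T * \<beta>"
    unfolding det_4 by (simp add: rows4_def bT bN bp sy TT NN NT Tp Np pp \<beta>_def[symmetric])
  then have G1: "D a N b p * \<beta> = lor a T * \<beta>"
    using Gram[of "rows4 a N b p" "rows4 T N b p"] Dbeta by (simp add: D_def)
  have "det (\<chi> i j. lor (rows4 T N b p $ i) (rows4 T N b p $ j)) = - \<beta>"
    unfolding det_4 by (simp add: rows4_def bT bN bp sy TT NN NT Tp Np pp \<beta>_def[symmetric])
  then have G2: "\<beta> * \<beta> = \<beta>"
    using Gram[of "rows4 T N b p" "rows4 T N b p"] Dbeta by (simp add: D_def)
  have bnz: "\<beta> \<noteq> 0"
  proof
    assume "\<beta> = 0"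
    then have "b = 0" using spacelike_tangent[OF H bp(1)] \<beta>_def by force
    then have z: "\<And>w. D T N w p = 0" using bw by (simp add: lor_def)
    have E: "\<And>i. 0 = eps i - (eps i * T$i)^2 - (eps i * N$i)^2 + (eps i * p$i)^2"
    proof -
      fix i :: 4
      show "0 = eps i - (eps i * T$i)^2 - (eps i * N$i)^2 + (eps i * p$i)^2"
    proof -
      have "det (\<chi> k j. lor (rows4 T N (axis i 1) p $ k) (rows4 T N (axis i 1) p $ j))
          = - (eps i - (eps i * T$i)^2 - (eps i * N$i)^2 + (eps i * p$i)^2)"
        unfolding det_4 using exhaust_4[of i]
        by (auto simp: rows4_def sy TT NN NT Tp Np pp lor_axis eps_def axis4 power2_eq_square algebra_simps)
      then show ?thesis
        using Gram[of "rows4 T N (axis i 1) p" "rows4 T N (axis i 1) p"] z[of "axis i 1"] by (simp add: D_def)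
    qed
    qed
    have "(\<Sum>i\<in>UNIV. eps i * (eps i - (eps i * T$i)^2 - (eps i * N$i)^2 + (eps i * p$i)^2)) = 1"
      using TT NN pp unfolding sum_4 lor_def eps_def by (simp add: power2_eq_square algebra_simps)
    then show False using E by simp
  qed
  from G1 bnz show ?thesis unfolding b_def by simp
qed
lemma comp_deriv:
  assumes "(F has_vector_derivative F') (at s)"
  shows "((\<lambda>t. F t $ i) has_real_derivative F' $ i) (at s)"
proof -
  have "((\<lambda>t. F t $ i) has_derivative (\<lambda>x. (x *\<^sub>R F') $ i)) (at s)"
    using bounded_linear.has_derivative[OF bounded_linear_vec_nth assms[unfolded has_vector_derivative_def]] .
  moreover have "(\<lambda>x. (x *\<^sub>R F') $ i) = (*) (F' $ i)" by (auto simp: fun_eq_iff)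
  ultimately show ?thesis unfolding has_field_derivative_def by simp
qed

lemma lor_deriv:
  assumes "(F has_vector_derivative F') (at s)" "(G has_vector_derivative G') (at s)"
  shows "((\<lambda>t. lor (F t) (G t)) has_real_derivative lor F' (G s) + lor (F s) G') (at s)"
  unfolding lor_def
  by (auto intro!: derivative_eq_intros comp_deriv[OF assms(1)] comp_deriv[OF assms(2)] simp: algebra_simps)

lemma deriv_zero_const:
  assumes "open I" "s \<in> I" "\<forall>t\<in>I. \<phi> t = c" "(\<phi> has_real_derivative d) (at s)"
  shows "d = 0"
proof -
  have "((\<lambda>t. c) has_real_derivative d) (at s)"
    using has_field_derivative_transform_within_open[OF assms(4) assms(1) assms(2), of "\<lambda>t. c"] assms(3) by simp
  then show ?thesis using DERIV_const DERIV_unique by blast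
qed

lemma D_deriv:
  assumes "(F has_vector_derivative F') (at s)" "(G has_vector_derivative G') (at s)"
  shows "((\<lambda>t. D u (F t) w (G t)) has_real_derivative D u F' w (G s) + D u (F s) w G') (at s)"
  unfolding D_expand
  by (auto intro!: derivative_eq_intros comp_deriv[OF assms(1)] comp_deriv[OF assms(2)] simp: algebra_simps)

lemma Q_deriv:
  assumes "(F has_vector_derivative F') (at s)" "(G has_vector_derivative G') (at s)"
  shows "\<exists>Q'. ((\<lambda>t. lor (Cr (G t) u (F t)) (Cr (G t) u (F t))) has_real_derivative Q') (at s)"
  unfolding lor_def Cr_def vec_lambda_beta
  apply (rule exI)
  apply (rule DERIV_diff DERIV_add DERIV_cmult DERIV_mult D_deriv[OF assms] DERIV_const)+
  done

lemma lor_scale: "lor (c *\<^sub>R x) y = c * lor x y" "lor x (c *\<^sub>R y) = c * lor x y"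
  unfolding lor_def by (simp_all add: algebra_simps)
lemma lor_add: "lor (x + y) w = lor x w + lor y w" "lor w (x + y) = lor w x + lor w y"
  unfolding lor_def by (simp_all add: algebra_simps)
lemma lor_zero: "lor 0 x = 0" "lor x 0 = 0" unfolding lor_def by simp_all
lemma D_proj: "D (a + c *\<^sub>R p) v w p = D a v w p"
  unfolding D_expand by (simp add: algebra_simps)
lemma Cr_proj: "Cr p (a + c *\<^sub>R p) v = Cr p a v"
  unfolding Cr_def D_proj ..
lemma D_lin2: "D u (x + y) w p = D u x w p + D u y w p" "D u (c *\<^sub>R y) w p = c * D u y w p"
  unfolding D_expand by (simp_all add: algebra_simps)

theorem mainTheorem10:
  fixes a :: "real^4" and q :: real and \<gamma> :: "real \<Rightarrow> real^4" and I :: "real set"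
    and V :: "real^4 \<Rightarrow> real^4"
  assumes a_nz: "a \<noteq> 0"
    and V_def: "\<And>p. V p = a + lor a p *\<^sub>R p"
    and q_nz: "q \<noteq> 0"
    and I_interval: "is_interval I" "open I" "I \<noteq> {}"
    and in_H: "\<forall>s\<in>I. in_H3 (\<gamma> s)"
    and diff_gamma: "\<forall>s\<in>I. \<gamma> differentiable (at s)"
    and diff_T: "\<forall>s\<in>I. tangentT \<gamma> differentiable (at s)"
    and diff_N: "\<forall>s\<in>I. normalN \<gamma> differentiable (at s)"
    and arclength: "\<forall>s\<in>I. lor (tangentT \<gamma> s) (tangentT \<gamma> s) = 1"
    and conformal: "\<forall>s\<in>I. covD \<gamma> (tangentT \<gamma>) s
                        = q *\<^sub>R crossH3 (\<gamma> s) (V (\<gamma> s)) (tangentT \<gamma> s)"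
    and non_geodesic: "\<forall>s\<in>I. curvature \<gamma> s > 0"
    and torsion_zero: "\<forall>s\<in>I. torsion \<gamma> s = 0"
  shows "(\<forall>s\<in>I. lor a (\<gamma> s) = 0) \<and> lor a a > 0"
proof -
  define T where "T = tangentT \<gamma>"
  define N where "N = normalN \<gamma>"
  define T' where "T' s = vector_derivative T (at s)" for s
  define N' where "N' s = vector_derivative N (at s)" for s
  define X where "X t = Cr (\<gamma> t) a (T t)" for t
  define Q where "Q t = lor (X t) (X t)" for t
  define \<kappa> where "\<kappa> t = curvature \<gamma> t" for t
  have oI: "open I" using I_interval by simp
  have hg: "(\<gamma> has_vector_derivative T s) (at s)" if "s \<in> I" for s
    using diff_gamma that unfolding T_def tangentT_def by (simp add: vector_derivative_works)
  have hT: "(T has_vector_derivative T' s) (at s)" if "s \<in> I" for s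
    using diff_T that unfolding T_def T'_def by (simp add: vector_derivative_works)
  have hN: "(N has_vector_derivative N' s) (at s)" if "s \<in> I" for s
    using diff_N that unfolding N_def N'_def by (simp add: vector_derivative_works)
  have gg: "lor (\<gamma> s) (\<gamma> s) = -1" if "s \<in> I" for s using in_H that by (simp add: in_H3_def)
  have TT: "lor (T s) (T s) = 1" if "s \<in> I" for s using arclength that by (simp add: T_def)
  have gT: "lor (\<gamma> s) (T s) = 0" if "s \<in> I" for s
  proof -
    have "lor (T s) (\<gamma> s) + lor (\<gamma> s) (T s) = 0"
      by (rule deriv_zero_const[OF oI that _ lor_deriv[OF hg[OF that] hg[OF that]], of "-1"])
         (simp add: gg)
    then show ?thesis by (simp add: lor_sym[of "T s"])
  qed
  have T'g: "lor (T' s) (\<gamma> s) = -1" if "s \<in> I" for s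
  proof -
    have "lor (T' s) (\<gamma> s) + lor (T s) (T s) = 0"
      by (rule deriv_zero_const[OF oI that _ lor_deriv[OF hT[OF that] hg[OF that]], of 0])
         (simp add: gT lor_sym[of "T _"])
    then show ?thesis using TT[OF that] by simp
  qed
  have T'eq: "T' s = \<gamma> s + q *\<^sub>R X s" if "s \<in> I" for s
  proof -
    have "covD \<gamma> T s = T' s - \<gamma> s"
      unfolding covD_def T'_def[symmetric] using T'g[OF that] by simp
    moreover have "covD \<gamma> T s = q *\<^sub>R X s"
      using conformal that crossH3_Cr[of "\<gamma> s"] in_H
      unfolding T_def[symmetric] X_def V_def by (simp add: Cr_proj)
    ultimately show ?thesis by (simp add: algebra_simps)
  qed
  have covT: "covD \<gamma> T s = q *\<^sub>R X s" if "s \<in> I" for s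
    using T'eq[OF that] T'g[OF that] unfolding covD_def T'_def[symmetric] by simp
  have kap: "\<kappa> s = \<bar>q\<bar> * sqrt (Q s)" if "s \<in> I" for s
  proof -
    have "\<kappa> s = sqrt (q * q * Q s)"
      unfolding \<kappa>_def curvature_def T_def[symmetric] covT[OF that] Q_def by (simp add: lor_scale)
    then show ?thesis by (simp add: real_sqrt_mult)
  qed
  have kpos: "\<kappa> s > 0" if "s \<in> I" for s using non_geodesic that \<kappa>_def by simp
  have Qpos: "Q s > 0" if "s \<in> I" for s
  proof -
    have "0 < \<bar>q\<bar> * sqrt (Q s)" using kpos[OF that] kap[OF that] by simp
    then have "0 < sqrt (Q s)" by (simp add: zero_less_mult_iff)
    then show ?thesis by simp
  qed
  define H where "H t = q / (\<bar>q\<bar> * sqrt (Q t))" for t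
  have NHX: "N s = H s *\<^sub>R X s" if "s \<in> I" for s
    unfolding N_def normalN_def T_def[symmetric] covT[OF that] \<kappa>_def[symmetric] kap[OF that] H_def
    by simp
  have Hnz: "H s \<noteq> 0" if "s \<in> I" for s using Qpos[OF that] q_nz unfolding H_def by simp
  have LX: "lor (X s) w = D a (T s) w (\<gamma> s)" for s w unfolding X_def by (rule lor_Cr)
  have NN: "lor (N s) (N s) = 1" if "s \<in> I" for s
  proof -
    have "lor (N s) (N s) = H s * H s * Q s" unfolding NHX[OF that] Q_def by (simp add: lor_scale)
    also have "\<dots> = 1" using Qpos[OF that] q_nz unfolding H_def
      by (simp add: field_simps abs_mult_self_eq)
    finally show ?thesis .
  qed
  have NT: "lor (N s) (T s) = 0" if "s \<in> I" for s
    unfolding NHX[OF that] lor_scale LX by (simp add: D_rep)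
  have Ng: "lor (N s) (\<gamma> s) = 0" if "s \<in> I" for s
    unfolding NHX[OF that] lor_scale LX by (simp add: D_rep)
  have Tg: "lor (T s) (\<gamma> s) = 0" if "s \<in> I" for s using gT[OF that] by (simp add: lor_sym)
  have aT: "lor a (T s) = 0" if s: "s \<in> I" for s
  proof -
    define b where "b = Cr (\<gamma> s) (T s) (N s)"
    have key: "D a (N s) b (\<gamma> s) = lor a (T s)"
      unfolding b_def using key_alg[OF in_H[rule_format, OF s] Tg[OF s] Ng[OF s] TT[OF s] NN[OF s] NT[OF s]] .
    have Bb: "binormalB \<gamma> s = b"
      unfolding binormalB_def b_def T_def[symmetric] N_def[symmetric] using crossH3_Cr in_H s by simp
    have gb: "lor (\<gamma> s) b = 0" unfolding b_def lor_sym[of "\<gamma> s"] lor_Cr by (simp add: D_rep)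
    have Nb: "lor (N' s) b = 0"
      using torsion_zero[rule_format, OF s] unfolding torsion_def N_def[symmetric] Bb covD_def N'_def[symmetric]
      by (simp add: lor_add lor_scale gb)
    define P where "P t = D a (T t) b (\<gamma> t)" for t
    have phiI: "lor (N t) b = H t * P t" if "t \<in> I" for t
      unfolding NHX[OF that] lor_scale LX P_def ..
    have Ps: "P s = 0"
    proof -
      have "lor (N s) b = 0" unfolding lor_sym[of "N s"] b_def lor_Cr by (simp add: D_rep)
      then show ?thesis using phiI[OF s] Hnz[OF s] by simp
    qed
    have dP: "(P has_real_derivative D a (T' s) b (\<gamma> s) + D a (T s) b (T s)) (at s)"
      unfolding P_def by (rule D_deriv[OF hT[OF s] hg[OF s]])
    obtain Q' where dQ: "(Q has_real_derivative Q') (at s)"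
      using Q_deriv[OF hT[OF s] hg[OF s], of a] unfolding Q_def X_def by blast
    have dsq: "((\<lambda>t. sqrt (Q t)) has_real_derivative inverse (sqrt (Q s)) / 2 * Q') (at s)"
      by (rule DERIV_chain2[OF DERIV_real_sqrt[OF Qpos[OF s]] dQ])
    obtain H' where dH: "(H has_real_derivative H') (at s)"
      using DERIV_divide[OF DERIV_const[of q] DERIV_cmult[OF dsq, of "\<bar>q\<bar>"]] Qpos[OF s] q_nz
      unfolding H_def[abs_def] by force
    have dphi1: "((\<lambda>t. H t * P t) has_real_derivative H s * (D a (T' s) b (\<gamma> s) + D a (T s) b (T s))) (at s)"
      using DERIV_mult[OF dH dP] Ps by (simp add: mult.commute)
    have dphi2: "((\<lambda>t. lor (N t) b) has_real_derivative lor (N' s) b) (at s)"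
      using lor_deriv[OF hN[OF s] has_vector_derivative_const[of b]] by (simp add: lor_zero)
    have dphi3: "((\<lambda>t. lor (N t) b) has_real_derivative H s * (D a (T' s) b (\<gamma> s) + D a (T s) b (T s))) (at s)"
      using has_field_derivative_transform_within_open[OF dphi1 oI s, of "\<lambda>t. lor (N t) b"] phiI by simp
    have "H s * (D a (T' s) b (\<gamma> s) + D a (T s) b (T s)) = 0"
      using DERIV_unique[OF dphi2 dphi3] Nb by simp
    then have "D a (T' s) b (\<gamma> s) = 0" using Hnz[OF s] by (simp add: D_rep)
    then have "q * D a (X s) b (\<gamma> s) = 0" unfolding T'eq[OF s] by (simp add: D_lin2 D_rep)
    then have "D a (X s) b (\<gamma> s) = 0" using q_nz by simp
    moreover have "X s = (1 / H s) *\<^sub>R N s" using NHX[OF s] Hnz[OF s] by simp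
    ultimately have "D a (N s) b (\<gamma> s) = 0" using Hnz[OF s] by (simp add: D_lin2)
    then show ?thesis using key by simp
  qed
  have ag: "lor a (\<gamma> s) = 0" if s: "s \<in> I" for s
  proof -
    have "lor 0 (T s) + lor a (T' s) = 0"
      by (rule deriv_zero_const[OF oI s _ lor_deriv[OF has_vector_derivative_const[of a] hT[OF s]], where c=0])
         (simp add: aT)
    then have "lor a (T' s) = 0" by (simp add: lor_zero)
    moreover have "lor a (X s) = 0" unfolding lor_sym[of a] LX by (simp add: D_rep)
    ultimately show ?thesis unfolding T'eq[OF s] by (simp add: lor_add lor_scale)
  qed
  obtain s0 where s0: "s0 \<in> I" using I_interval by blast
  have "lor a a > 0" using spacelike_tangent[OF in_H[rule_format, OF s0] ag[OF s0] a_nz] .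
  with ag show ?thesis by blast
qed
end
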